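(* Let $H_1$ and $H_2$ be simple, undirected, connected graphs on the same vertex set $V$, each of girth at least $6$, such that $H_1^2 = H_2^2$ (equal as graphs on $V$). Then $H_1$ and $H_2$ are isomorphic.
   Context: For a simple, undirected, connected graph $H$, its square $H^2$ is the graph on the same vertex set in which two distinct vertices are adjacent if and only if their distance in $H$ is at most $2$. The girth of a graph is the length of its shortest cycle ($\infty$ for a tree). *)

theory Defs
  imports Main "HOL-Library.Extended_Nat"
begin

definition simple_graph :: "'a set \<Rightarrow> ('a \<Rightarrow> 'a \<Rightarrow> bool) \<Rightarrow> bool" where
  "simple_graph V E \<longleftrightarrow>
     (\<forall>x y. E x y \<longrightarrow> x \<in> V \<and> y \<in> V) \<and>
     (\<forall>x y. E x y \<longrightarrow> E y x) \<and>
     (\<forall>x. \<not> E x x)"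

definition connected_graph :: "'a set \<Rightarrow> ('a \<Rightarrow> 'a \<Rightarrow> bool) \<Rightarrow> bool" where
  "connected_graph V E \<longleftrightarrow> V \<noteq> {} \<and> (\<forall>x\<in>V. \<forall>y\<in>V. E\<^sup>*\<^sup>* x y)"

definition graph_square :: "('a \<Rightarrow> 'a \<Rightarrow> bool) \<Rightarrow> 'a \<Rightarrow> 'a \<Rightarrow> bool" where
  "graph_square E x y \<longleftrightarrow> x \<noteq> y \<and> (E x y \<or> (\<exists>z. E x z \<and> E z y))"

definition is_cycle :: "('a \<Rightarrow> 'a \<Rightarrow> bool) \<Rightarrow> 'a list \<Rightarrow> bool" where
  "is_cycle E cs \<longleftrightarrow> length cs \<ge> 3 \<and> distinct cs \<and>
     (\<forall>i < length cs. E (cs ! i) (cs ! ((i + 1) mod length cs)))"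

text \<open>Girth: length of a shortest cycle, \<infinity> if there is none.\<close>
definition girth :: "('a \<Rightarrow> 'a \<Rightarrow> bool) \<Rightarrow> enat" where
  "girth E = (INF cs \<in> {cs. is_cycle E cs}. enat (length cs))"

definition graph_iso :: "'a set \<Rightarrow> ('a \<Rightarrow> 'a \<Rightarrow> bool) \<Rightarrow> ('a \<Rightarrow> 'a \<Rightarrow> bool) \<Rightarrow> bool" where
  "graph_iso V E1 E2 \<longleftrightarrow>
     (\<exists>f. bij_betw f V V \<and> (\<forall>x\<in>V. \<forall>y\<in>V. E1 x y \<longleftrightarrow> E2 (f x) (f y)))"

end

theory Submission
  imports Defs
begin

lemma girth_le: "is_cycle H cs \<Longrightarrow> girth H \<le> enat (length cs)"
  unfolding girth_def by (rule INF_lower) simp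

lemma cyc_len: "girth H \<ge> 6 \<Longrightarrow> is_cycle H cs \<Longrightarrow> length cs \<ge> 6"
  using girth_le[of H cs] by (metis enat_ord_simps(1) order_trans numeral_eq_enat)

lemma no3: assumes "girth H \<ge> 6" "\<forall>x. \<not> H x x" "H a b" "H b c" "H c a" shows False
proof -
  have "a \<noteq> b" "b \<noteq> c" "c \<noteq> a" using assms by metis+
  then have "is_cycle H [a,b,c]" unfolding is_cycle_def using assms
    by (auto simp: less_Suc_eq)
  from cyc_len[OF assms(1) this] show False by simp
qed

lemma no4: assumes "girth H \<ge> 6" "\<forall>x. \<not> H x x" "H a b" "H b c" "H c d" "H d a" "a \<noteq> c" "b \<noteq> d" shows False
proof -
  have "a \<noteq> b" "b \<noteq> c" "c \<noteq> d" "d \<noteq> a" using assms by metis+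
  then have "is_cycle H [a,b,c,d]" unfolding is_cycle_def using assms
    by (auto simp: less_Suc_eq)
  from cyc_len[OF assms(1) this] show False by simp
qed

lemma no5: assumes "girth H \<ge> 6" "H a b" "H b c" "H c d" "H d e" "H e a" "distinct [a,b,c,d,e]" shows False
proof -
  have "is_cycle H [a,b,c,d,e]" unfolding is_cycle_def using assms
    by (auto simp: less_Suc_eq)
  from cyc_len[OF assms(1) this] show False by simp
qed

definition gd :: "('a \<Rightarrow> 'a \<Rightarrow> bool) \<Rightarrow> bool" where
  "gd H \<longleftrightarrow> (\<forall>x y. H x y \<longrightarrow> H y x) \<and> (\<forall>x. \<not> H x x) \<and> 6 \<le> girth H"

lemma gd_sym: "gd H \<Longrightarrow> H x y \<Longrightarrow> H y x" unfolding gd_def by blast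
lemma gd_irr: "gd H \<Longrightarrow> \<not> H x x" unfolding gd_def by blast
lemma gd_3: "gd H \<Longrightarrow> H a b \<Longrightarrow> H b c \<Longrightarrow> H c a \<Longrightarrow> False"
  unfolding gd_def using no3 by metis
lemma gd_4: "gd H \<Longrightarrow> H a b \<Longrightarrow> H b c \<Longrightarrow> H c d \<Longrightarrow> H d a \<Longrightarrow> a \<noteq> c \<Longrightarrow> b \<noteq> d \<Longrightarrow> False"
  unfolding gd_def using no4 by metis
lemma gd_5: "gd H \<Longrightarrow> H a b \<Longrightarrow> H b c \<Longrightarrow> H c d \<Longrightarrow> H d e \<Longrightarrow> H e a \<Longrightarrow> distinct [a,b,c,d,e] \<Longrightarrow> False"
  unfolding gd_def using no5 by metis

lemma sq_sym: "gd H \<Longrightarrow> graph_square H x y \<Longrightarrow> graph_square H y x"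
  unfolding graph_square_def using gd_sym by metis

lemma factA:
  assumes g: "gd H" and xy: "H x y" and "w \<noteq> x" "w \<noteq> y"
    and wx: "graph_square H w x" and wy: "graph_square H w y"
  shows "H x w \<or> H y w"
proof (rule ccontr)
  assume n: "\<not> (H x w \<or> H y w)"
  then have n1: "\<not> H w x" "\<not> H w y" using gd_sym[OF g] by blast+
  from wx n1 obtain a where a: "H w a" "H a x" unfolding graph_square_def by blast
  from wy n1 obtain b where b: "H w b" "H b y" unfolding graph_square_def by blast
  show False
  proof (cases "a = b")
    case True
    then show False using gd_3[OF g xy, of a] a b gd_sym[OF g] by metis
  next
    case False
    have d: "distinct [x,a,w,b,y]"
      using False a b n n1 xy gd_irr[OF g] gd_sym[OF g] assms(3,4) by auto
    show False using gd_5[OF g _ _ _ _ _ d] a b xy gd_sym[OF g] by metis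
  qed
qed

lemma charL:
  assumes g: "gd H" and xy: "H x y" and "w \<noteq> x" "w \<noteq> y"
  shows "H y w \<longleftrightarrow> graph_square H w x \<and> graph_square H w y \<and> \<not> H x w"
proof
  assume yw: "H y w"
  show "graph_square H w x \<and> graph_square H w y \<and> \<not> H x w"
    using yw xy assms(3,4) gd_sym[OF g] gd_3[OF g] unfolding graph_square_def by metis
next
  assume "graph_square H w x \<and> graph_square H w y \<and> \<not> H x w"
  then show "H y w" using factA[OF g xy assms(3,4)] by blast
qed

lemma cross:
  assumes g: "gd H" and xy: "H x y" and xa: "H x a" and yb: "H y b" and "a \<noteq> y" "b \<noteq> x"
  shows "\<not> graph_square H a b"
proof
  assume ab: "graph_square H a b"
  have "a \<noteq> b" using ab unfolding graph_square_def by blast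
  show False
  proof (cases "H a b")
    case True
    show False using gd_4[OF g, of a x y b] True xa xy yb assms(5,6) gd_sym[OF g] by metis
  next
    case False
    then obtain z where z: "H a z" "H z b" using ab unfolding graph_square_def by blast
    show False
    proof (cases "z = x \<or> z = y")
      case True
      then show False using z xy xa yb gd_3[OF g] gd_sym[OF g] by metis
    next
      case False
      have d: "distinct [a,x,y,b,z]"
        using False z xy xa yb \<open>a \<noteq> b\<close> assms(5,6) gd_irr[OF g] by auto
      show False using gd_5[OF g _ _ _ _ _ d] z xy xa yb gd_sym[OF g] by metis
    qed
  qed
qed


lemma prop_step:
  assumes g1: "gd H1" and g2: "gd H2" and sq: "graph_square H1 = graph_square H2"
    and xy: "H1 x y" and e: "\<forall>w. H1 x w = H2 x w"
  shows "H1 y w = H2 y w"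
proof -
  have xy2: "H2 x y" using e xy by blast
  show ?thesis
  proof (cases "w = x \<or> w = y")
    case True
    then show ?thesis using xy xy2 gd_sym[OF g1] gd_sym[OF g2] gd_irr[OF g1] gd_irr[OF g2] by metis
  next
    case False
    then have "w \<noteq> x" "w \<noteq> y" by auto
    show ?thesis
      using charL[OF g1 xy \<open>w \<noteq> x\<close> \<open>w \<noteq> y\<close>] charL[OF g2 xy2 \<open>w \<noteq> x\<close> \<open>w \<noteq> y\<close>] sq e by simp
  qed
qed

lemma swap:
  assumes g1: "gd H1" and g2: "gd H2" and sq: "graph_square H1 = graph_square H2"
    and uv1: "H1 u v" and uv2: "H2 u v" and ne: "\<not> (\<forall>w. H1 u w = H2 u w)"
    and wu: "w \<noteq> u" and wv: "w \<noteq> v"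
  shows "H2 u w = H1 v w"
proof -
  let ?G = "graph_square H1"
  define T where "T z \<longleftrightarrow> z \<noteq> u \<and> z \<noteq> v \<and> ?G z u \<and> ?G z v" for z
  have c1: "H1 v z \<longleftrightarrow> \<not> H1 u z" if "T z" for z
    using that charL[OF g1 uv1, of z] unfolding T_def by blast
  have c2: "H2 v z \<longleftrightarrow> \<not> H2 u z" if "T z" for z
    using that charL[OF g2 uv2, of z] unfolding T_def sq by blast
  have o1: "\<not> H1 u z \<and> \<not> H1 v z" if "z \<noteq> u" "z \<noteq> v" "\<not> T z" for z
    using that uv1 gd_sym[OF g1] unfolding T_def graph_square_def by metis
  have o2: "\<not> H2 u z \<and> \<not> H2 v z" if "z \<noteq> u" "z \<noteq> v" "\<not> T z" for z
    using that uv2 gd_sym[OF g2] unfolding T_def sq graph_square_def by metis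
  have s1: "?G s t \<longleftrightarrow> (H1 u s \<longleftrightarrow> H1 u t)" if "T s" "T t" "s \<noteq> t" for s t
  proof (cases "H1 u s"; cases "H1 u t")
    assume "H1 u s" "H1 u t" then show ?thesis using that gd_sym[OF g1] unfolding graph_square_def by metis
  next
    assume a: "H1 u s" "\<not> H1 u t"
    then have "H1 v t" using c1 that by blast
    then show ?thesis using a cross[OF g1 uv1 a(1)] that unfolding T_def by blast
  next
    assume a: "\<not> H1 u s" "H1 u t"
    then have "H1 v s" using c1 that by blast
    then show ?thesis using a cross[OF g1 uv1 a(2)] sq_sym[OF g1] that unfolding T_def by blast
  next
    assume a: "\<not> H1 u s" "\<not> H1 u t"
    then have "H1 v s" "H1 v t" using c1 that by blast+
    then show ?thesis using a that gd_sym[OF g1] unfolding graph_square_def by metis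
  qed
  have s2: "graph_square H2 s t \<longleftrightarrow> (H2 u s \<longleftrightarrow> H2 u t)" if "T s" "T t" "s \<noteq> t" for s t
  proof (cases "H2 u s"; cases "H2 u t")
    assume "H2 u s" "H2 u t" then show ?thesis using that gd_sym[OF g2] unfolding graph_square_def by metis
  next
    assume a: "H2 u s" "\<not> H2 u t"
    then have "H2 v t" using c2 that by blast
    then show ?thesis using a cross[OF g2 uv2 a(1)] that unfolding T_def sq by blast
  next
    assume a: "\<not> H2 u s" "H2 u t"
    then have "H2 v s" using c2 that by blast
    then show ?thesis using a cross[OF g2 uv2 a(2)] sq_sym[OF g2] that unfolding T_def sq by blast
  next
    assume a: "\<not> H2 u s" "\<not> H2 u t"
    then have "H2 v s" "H2 v t" using c2 that by blast+
    then show ?thesis using a that gd_sym[OF g2] unfolding graph_square_def by metis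
  qed
  have key: "(H1 u s \<longleftrightarrow> H1 u t) \<longleftrightarrow> (H2 u s \<longleftrightarrow> H2 u t)" if "T s" "T t" for s t
    using s1[OF that] s2[OF that] sq by (cases "s = t") auto
  show ?thesis
  proof (rule ccontr)
    assume bad: "H2 u w \<noteq> H1 v w"
    have Tw: "T w" using o1[OF wu wv] o2[OF wu wv] bad by blast
    have eqw: "H1 u w = H2 u w" using bad c1[OF Tw] by blast
    have "H1 u z = H2 u z" for z
    proof -
      consider "z = u" | "z = v" | "z \<noteq> u" "z \<noteq> v" "T z" | "z \<noteq> u" "z \<noteq> v" "\<not> T z" by blast
      then show ?thesis
      proof cases
        case 1 then show ?thesis using gd_irr[OF g1] gd_irr[OF g2] by metis
      next
        case 2 then show ?thesis using uv1 uv2 by blast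
      next
        case 3 then show ?thesis using key[OF Tw 3(3)] eqw by blast
      next
        case 4 then show ?thesis using o1[OF 4] o2[OF 4] by blast
      qed
    qed
    then show False using ne by blast
  qed
qed


lemma key_dir:
  assumes g1: "gd H1" and g2: "gd H2" and sq: "graph_square H1 = graph_square H2"
    and ne: "\<And>u v. H1 u v \<Longrightarrow> H2 u v \<Longrightarrow> \<not> (\<forall>w. H1 u w = H2 u w)"
    and fd: "f = (\<lambda>x. if \<exists>y. H1 x y \<and> H2 x y then THE y. H1 x y \<and> H2 x y else x)"
    and xy: "H1 x y"
  shows "H2 (f x) (f y)"
proof -
  define M where "M a b \<longleftrightarrow> H1 a b \<and> H2 a b" for a b
  have Ms: "M a b \<Longrightarrow> M b a" for a b unfolding M_def using gd_sym[OF g1] gd_sym[OF g2] by blast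
  have sw: "H2 u w = H1 v w" if "M u v" "w \<noteq> u" "w \<noteq> v" for u v w
    using swap[OF g1 g2 sq _ _ ne] that unfolding M_def by blast
  have uniq: "v = w" if "M u v" "M u w" for u v w
  proof (rule ccontr)
    assume "v \<noteq> w"
    moreover have "w \<noteq> u" using that gd_irr[OF g1] unfolding M_def by metis
    ultimately have "H1 v w" using sw[OF that(1)] that(2) unfolding M_def by blast
    then show False using that gd_3[OF g1] gd_sym[OF g1] unfolding M_def by metis
  qed
  have fM: "f a = b" if "M a b" for a b
  proof -
    have "(THE y. M a y) = b" using that uniq by (intro the_equality) auto
    then show ?thesis using that unfolding fd M_def by auto
  qed
  have fN: "f a = a" if "\<not> (\<exists>b. M a b)" for a
    using that unfolding fd M_def by auto
  have xy_ne: "x \<noteq> y" using xy gd_irr[OF g1] by metis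
  show ?thesis
  proof (cases "M x y")
    case True
    then show ?thesis using fM[OF True] fM[OF Ms[OF True]] gd_sym[OF g2] unfolding M_def by metis
  next
    case nM: False
    show ?thesis
    proof (cases "\<exists>b. M x b"; cases "\<exists>b. M y b")
      assume "\<exists>b. M x b" "\<exists>b. M y b"
      then obtain x' y' where x': "M x x'" and y': "M y y'" by blast
      have "x' \<noteq> y" using nM x' by blast
      have "y' \<noteq> x" using nM y' Ms by blast
      have "x' \<noteq> y'" using uniq[OF Ms[OF x'] ] Ms[OF y'] xy_ne by metis
      have "x' \<noteq> x" "y' \<noteq> y" using x' y' gd_irr[OF g1] unfolding M_def by metis+
      have 1: "H2 x' y" using sw[OF Ms[OF x'], of y] xy \<open>x' \<noteq> y\<close> xy_ne by metis
      have 2: "H2 y' x" using sw[OF Ms[OF y'], of x] xy gd_sym[OF g1] \<open>y' \<noteq> x\<close> xy_ne by metis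
      show ?thesis using gd_4[OF g2 1, of y' x] 2 x' y' \<open>x' \<noteq> y'\<close> xy_ne unfolding M_def by metis
    next
      assume "\<exists>b. M x b" "\<not> (\<exists>b. M y b)"
      then obtain x' where x': "M x x'" by blast
      have "x' \<noteq> y" using nM x' by blast
      have 1: "H2 x' y" using sw[OF Ms[OF x'], of y] xy \<open>x' \<noteq> y\<close> xy_ne by metis
      then show ?thesis using fM[OF x'] fN \<open>\<not> (\<exists>b. M y b)\<close> by metis
    next
      assume "\<not> (\<exists>b. M x b)" "\<exists>b. M y b"
      then obtain y' where y': "M y y'" by blast
      have "y' \<noteq> x" using nM y' Ms by blast
      have 2: "H2 y' x" using sw[OF Ms[OF y'], of x] xy gd_sym[OF g1] \<open>y' \<noteq> x\<close> xy_ne by metis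
      then show ?thesis using fM[OF y'] fN \<open>\<not> (\<exists>b. M x b)\<close> gd_sym[OF g2] by metis
    next
      assume nx: "\<not> (\<exists>b. M x b)" and ny: "\<not> (\<exists>b. M y b)"
      have "H2 x y"
      proof (rule ccontr)
        assume n2: "\<not> H2 x y"
        have "graph_square H2 x y" using xy xy_ne sq unfolding graph_square_def by metis
        then obtain m where m: "H2 x m" "H2 m y" using n2 unfolding graph_square_def by blast
        have "m \<noteq> x" "m \<noteq> y" using m gd_irr[OF g2] by metis+
        have "graph_square H1 m x" "graph_square H1 m y"
          using m \<open>m \<noteq> x\<close> \<open>m \<noteq> y\<close> gd_sym[OF g2] unfolding sq graph_square_def by metis+
        then have "H1 x m \<or> H1 y m" using factA[OF g1 xy \<open>m \<noteq> x\<close> \<open>m \<noteq> y\<close>] by blast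
        then show False using nx ny m gd_sym[OF g2] unfolding M_def by metis
      qed
      then show ?thesis using fN nx ny by metis
    qed
  qed
qed

theorem theorem1:
  fixes V :: "'a set" and H1 H2 :: "'a \<Rightarrow> 'a \<Rightarrow> bool"
  assumes "finite V"
    and "simple_graph V H1" and "simple_graph V H2"
    and "connected_graph V H1" and "connected_graph V H2"
    and "girth H1 \<ge> 6" and "girth H2 \<ge> 6"
    and "graph_square H1 = graph_square H2"
  shows "graph_iso V H1 H2"
proof -
  have g1: "gd H1" using assms(2,6) unfolding gd_def simple_graph_def by blast
  have g2: "gd H2" using assms(3,7) unfolding gd_def simple_graph_def by blast
  note sq = assms(8)
  show ?thesis
  proof (cases "\<exists>v\<in>V. \<forall>w. H1 v w = H2 v w")
    case True
    then obtain v where v: "v \<in> V" "\<forall>w. H1 v w = H2 v w" by blast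
    have "\<forall>w. H1 x w = H2 x w" if "H1\<^sup>*\<^sup>* v x" for x
      using that
    proof (induction rule: rtranclp_induct)
      case base then show ?case using v by blast
    next
      case (step y z) then show ?case using prop_step[OF g1 g2 sq] by blast
    qed
    then have "\<forall>x\<in>V. \<forall>w. H1 x w = H2 x w"
      using assms(4) v(1) unfolding connected_graph_def by blast
    then show ?thesis unfolding graph_iso_def by (intro exI[of _ id]) auto
  next
    case False
    have inV: "H1 a b \<Longrightarrow> a \<in> V \<and> b \<in> V" "H2 a b \<Longrightarrow> a \<in> V \<and> b \<in> V" for a b
      using assms(2,3) unfolding simple_graph_def by blast+
    have ne1: "\<not> (\<forall>w. H1 u w = H2 u w)" if "H1 u v" "H2 u v" for u v
    proof -
      have "u \<in> V" using inV(1)[OF that(1)] by blast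
      then show ?thesis using False by blast
    qed
    have ne2: "\<not> (\<forall>w. H2 u w = H1 u w)" if "H2 u v" "H1 u v" for u v
      using ne1[OF that(2,1)] by (auto simp: eq_commute)
    define f where "f = (\<lambda>x. if \<exists>y. H1 x y \<and> H2 x y then THE y. H1 x y \<and> H2 x y else x)"
    have f2: "f = (\<lambda>x. if \<exists>y. H2 x y \<and> H1 x y then THE y. H2 x y \<and> H1 x y else x)"
    proof -
      have eqP: "\<And>x. (\<lambda>y. H1 x y \<and> H2 x y) = (\<lambda>y. H2 x y \<and> H1 x y)" by auto
      show ?thesis unfolding f_def by (simp only: eqP)
    qed
    have sq': "graph_square H2 = graph_square H1" using sq by simp
    have fw: "H1 x y \<Longrightarrow> H2 (f x) (f y)" for x y
      by (rule key_dir[OF g1 g2 sq ne1 f_def])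
    have bw: "H2 x y \<Longrightarrow> H1 (f x) (f y)" for x y
      by (rule key_dir[OF g2 g1 sq' ne2 f2])
    have fM: "f x = y" if y: "H1 x y" "H2 x y" for x y
    proof -
      have u: "H1 x z \<and> H2 x z \<Longrightarrow> z = y" for z
      proof (rule ccontr)
        assume a: "H1 x z \<and> H2 x z" "z \<noteq> y"
        have "z \<noteq> x" using a gd_irr[OF g1] by metis
        then have "H1 y z" using swap[OF g1 g2 sq y ne1[OF y], of z] a by blast
        then show False using gd_3[OF g1 y(1) \<open>H1 y z\<close> gd_sym[OF g1 conjunct1[OF a(1)]]] by blast
      qed
      have "(THE z. H1 x z \<and> H2 x z) = y" by (rule the_equality) (use y u in blast)+
      then show "f x = y" unfolding f_def using y by (simp add: exI[of _ y])
    qed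
    have fN: "f x = x" if "\<not> (\<exists>y. H1 x y \<and> H2 x y)" for x
      unfolding f_def by (simp only: if_not_P[OF that] if_False)
    have ff: "f (f x) = x" for x
    proof (cases "\<exists>y. H1 x y \<and> H2 x y")
      case True
      then obtain y where y: "H1 x y" "H2 x y" by blast
      have y': "H1 y x" "H2 y x" using y gd_sym[OF g1] gd_sym[OF g2] by blast+
      show ?thesis using fM[OF y] fM[OF y'] by simp
    next
      case False
      then show ?thesis using fN[OF False] by simp
    qed
    have fV: "f x \<in> V" if "x \<in> V" for x
    proof (cases "\<exists>y. H1 x y \<and> H2 x y")
      case True
      then obtain y where y: "H1 x y" "H2 x y" by blast
      show ?thesis using fM[OF y] inV(1)[OF y(1)] by simp
    next
      case False
      then show ?thesis using fN[OF False] that by simp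
    qed
    have bij: "bij_betw f V V"
      by (rule bij_betw_byWitness[where f'=f]) (use ff fV in auto)
    show ?thesis unfolding graph_iso_def
    proof (intro exI[of _ f] conjI bij ballI)
      fix x y assume "x \<in> V" "y \<in> V"
      show "H1 x y \<longleftrightarrow> H2 (f x) (f y)"
        using fw[of x y] bw[of "f x" "f y"] by (auto simp: ff)
    qed
  qed
qed

end
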